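(* Let the timeline be $(\mathbb{Z},\leq)$, let $\Pi$ be a propositional DatalogMTL program, $\mathcal{D}$ a dataset in normal form, $Q$ a proposition and $t_B\le t_E$ integers. Let $B,E,Q'$ be fresh propositions and $\Pi^Q=\Pi\cup\{Q'\leftarrow Q\,\mathcal{U}_{[0,\infty)}\,E,\ \bot\leftarrow B\wedge Q'\}$. Then $Q@[t_B,t_E]$ is entailed from $(\mathcal{D},\Pi)$ under the $s$-brave semantics if and only if there exists a subset $\mathcal{D}'\subseteq\mathcal{D}$ such that $\mathcal{D}'$ is $\Pi$-consistent and $\mathcal{D}'\cup\{B@\{t_B-1\},E@\{t_E+1\}\}$ is $\Pi^Q$-inconsistent.
   Context: A propositional DatalogMTL program uses only nullary predicates. $\mathfrak{M},t\models A\,\mathcal{U}_\varrho A'$ iff there is $t'$ with $t'-t\in\varrho$, $\mathfrak{M},t'\models A'$, and $A$ holds at all $s\in(t,t')$. A dataset is a finite set of facts $P@\iota$ ($\iota$ a non-empty interval); $\Pi$-consistency and entailment are as usual. A set of facts is in normal form if it contains no two distinct facts $P@\iota_1,P@\iota_2$ with $\iota_1\cup\iota_2$ (as a set of integers) equal to the set of integers of an interval. An $s$-repair of $\mathcal{D}$ w.r.t. $\Pi$ is a $\subseteq$-maximal $\Pi$-consistent subset of $\mathcal{D}$. $Q@[t_B,t_E]$ is entailed under $s$-brave semantics if $(\mathcal{R},\Pi)\models Q@[t_B,t_E]$ for some $s$-repair $\mathcal{R}$. *)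

theory Defs
  imports Main
begin

text \<open>Metric ranges: non-negative intervals (a, Some b) = [a,b], (a, None) = [a,\<infinity>).
  Over the integers open/closed endpoints can always be normalised to closed ones.\<close>
type_synonym mrange = "nat \<times> nat option"

definition in_range :: "mrange \<Rightarrow> int \<Rightarrow> bool" where
  "in_range \<rho> d \<longleftrightarrow> int (fst \<rho>) \<le> d \<and> (case snd \<rho> of None \<Rightarrow> True | Some b \<Rightarrow> d \<le> int b)"

datatype 'p body =
    BTop | BBot | BAtom 'p
  | BBoxMinus mrange "'p body" | BBoxPlus mrange "'p body"
  | BDiaMinus mrange "'p body" | BDiaPlus mrange "'p body"
  | BSince mrange "'p body" "'p body" | BUntil mrange "'p body" "'p body"

datatype 'p head = HBot | HAtom 'p | HBoxMinus mrange "'p head" | HBoxPlus mrange "'p head"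

type_synonym 'p rule = "'p head \<times> 'p body list"

type_synonym 'p interp = "'p \<Rightarrow> int \<Rightarrow> bool"

fun holds :: "'p interp \<Rightarrow> int \<Rightarrow> 'p body \<Rightarrow> bool" where
  "holds M t BTop = True"
| "holds M t BBot = False"
| "holds M t (BAtom p) = M p t"
| "holds M t (BBoxMinus r A) = (\<forall>s. in_range r (t - s) \<longrightarrow> holds M s A)"
| "holds M t (BBoxPlus r A) = (\<forall>s. in_range r (s - t) \<longrightarrow> holds M s A)"
| "holds M t (BDiaMinus r A) = (\<exists>s. in_range r (t - s) \<and> holds M s A)"
| "holds M t (BDiaPlus r A) = (\<exists>s. in_range r (s - t) \<and> holds M s A)"
| "holds M t (BSince r A A') =
     (\<exists>t'. in_range r (t - t') \<and> holds M t' A' \<and> (\<forall>s. t' < s \<and> s < t \<longrightarrow> holds M s A))"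
| "holds M t (BUntil r A A') =
     (\<exists>t'. in_range r (t' - t) \<and> holds M t' A' \<and> (\<forall>s. t < s \<and> s < t' \<longrightarrow> holds M s A))"

fun hholds :: "'p interp \<Rightarrow> int \<Rightarrow> 'p head \<Rightarrow> bool" where
  "hholds M t HBot = False"
| "hholds M t (HAtom p) = M p t"
| "hholds M t (HBoxMinus r H) = (\<forall>s. in_range r (t - s) \<longrightarrow> hholds M s H)"
| "hholds M t (HBoxPlus r H) = (\<forall>s. in_range r (s - t) \<longrightarrow> hholds M s H)"

definition model_rule :: "'p interp \<Rightarrow> 'p rule \<Rightarrow> bool" where
  "model_rule M r \<longleftrightarrow> (\<forall>t. (\<forall>A\<in>set (snd r). holds M t A) \<longrightarrow> hholds M t (fst r))"

definition model_prog :: "'p interp \<Rightarrow> 'p rule set \<Rightarrow> bool" where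
  "model_prog M \<Pi> \<longleftrightarrow> (\<forall>r\<in>\<Pi>. model_rule M r)"

definition iset :: "int option \<Rightarrow> int option \<Rightarrow> int set" where
  "iset l u = {t. (case l of None \<Rightarrow> True | Some a \<Rightarrow> a \<le> t) \<and> (case u of None \<Rightarrow> True | Some b \<Rightarrow> t \<le> b)}"

text \<open>A fact P@\<iota>, \<iota> represented by its lower and upper bounds.\<close>
type_synonym 'p fact = "'p \<times> int option \<times> int option"

definition fact_set :: "'p fact \<Rightarrow> int set" where
  "fact_set f = iset (fst (snd f)) (snd (snd f))"

definition is_dataset :: "'p fact set \<Rightarrow> bool" where
  "is_dataset D \<longleftrightarrow> finite D \<and> (\<forall>f\<in>D. fact_set f \<noteq> {})"

definition model_data :: "'p interp \<Rightarrow> 'p fact set \<Rightarrow> bool" where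
  "model_data M D \<longleftrightarrow> (\<forall>f\<in>D. \<forall>t\<in>fact_set f. M (fst f) t)"

definition consistent :: "'p rule set \<Rightarrow> 'p fact set \<Rightarrow> bool" where
  "consistent \<Pi> D \<longleftrightarrow> (\<exists>M. model_prog M \<Pi> \<and> model_data M D)"

definition entails :: "'p rule set \<Rightarrow> 'p fact set \<Rightarrow> 'p \<Rightarrow> int \<Rightarrow> int \<Rightarrow> bool" where
  "entails \<Pi> D Q tB tE \<longleftrightarrow>
     (\<forall>M. model_prog M \<Pi> \<and> model_data M D \<longrightarrow> (\<forall>t. tB \<le> t \<and> t \<le> tE \<longrightarrow> M Q t))"

definition normal_form :: "'p fact set \<Rightarrow> bool" where
  "normal_form D \<longleftrightarrow> (\<forall>f1\<in>D. \<forall>f2\<in>D. f1 \<noteq> f2 \<and> fst f1 = fst f2 \<longrightarrow>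
      \<not> (\<exists>l u. fact_set f1 \<union> fact_set f2 = iset l u))"

definition s_repair :: "'p rule set \<Rightarrow> 'p fact set \<Rightarrow> 'p fact set \<Rightarrow> bool" where
  "s_repair \<Pi> D R \<longleftrightarrow> R \<subseteq> D \<and> consistent \<Pi> R \<and>
     (\<forall>R'. R \<subset> R' \<and> R' \<subseteq> D \<longrightarrow> \<not> consistent \<Pi> R')"

definition s_brave :: "'p rule set \<Rightarrow> 'p fact set \<Rightarrow> 'p \<Rightarrow> int \<Rightarrow> int \<Rightarrow> bool" where
  "s_brave \<Pi> D Q tB tE \<longleftrightarrow> (\<exists>R. s_repair \<Pi> D R \<and> entails \<Pi> R Q tB tE)"

fun body_props :: "'p body \<Rightarrow> 'p set" where
  "body_props BTop = {}"
| "body_props BBot = {}"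
| "body_props (BAtom p) = {p}"
| "body_props (BBoxMinus r A) = body_props A"
| "body_props (BBoxPlus r A) = body_props A"
| "body_props (BDiaMinus r A) = body_props A"
| "body_props (BDiaPlus r A) = body_props A"
| "body_props (BSince r A A') = body_props A \<union> body_props A'"
| "body_props (BUntil r A A') = body_props A \<union> body_props A'"

fun head_props :: "'p head \<Rightarrow> 'p set" where
  "head_props HBot = {}"
| "head_props (HAtom p) = {p}"
| "head_props (HBoxMinus r H) = head_props H"
| "head_props (HBoxPlus r H) = head_props H"

definition prog_props :: "'p rule set \<Rightarrow> 'p set" where
  "prog_props \<Pi> = (\<Union>r\<in>\<Pi>. head_props (fst r) \<union> (\<Union>A\<in>set (snd r). body_props A))"

definition data_props :: "'p fact set \<Rightarrow> 'p set" where
  "data_props D = fst ` D"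

definition prog_Q :: "'p rule set \<Rightarrow> 'p \<Rightarrow> 'p \<Rightarrow> 'p \<Rightarrow> 'p \<Rightarrow> 'p rule set" where
  "prog_Q \<Pi> Q B E Q' = \<Pi> \<union> {(HAtom Q', [BUntil (0, None) (BAtom Q) (BAtom E)]),
                             (HBot, [BAtom B, BAtom Q'])}"

definition point_fact :: "'p \<Rightarrow> int \<Rightarrow> 'p fact" where
  "point_fact P t = (P, Some t, Some t)"

end

theory Submission
  imports Defs
begin

lemma holds_cong: "(\<And>p. p \<in> body_props A \<Longrightarrow> M p = M' p) \<Longrightarrow> holds M t A = holds M' t A"
  by (induction A arbitrary: t) auto

lemma hholds_cong: "(\<And>p. p \<in> head_props H \<Longrightarrow> M p = M' p) \<Longrightarrow> hholds M t H = hholds M' t H"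
  by (induction H arbitrary: t) auto

lemma model_prog_cong:
  assumes "\<And>p. p \<in> prog_props \<Pi> \<Longrightarrow> M p = M' p" and "model_prog M \<Pi>"
  shows "model_prog M' \<Pi>"
  unfolding model_prog_def model_rule_def
proof (intro ballI allI impI)
  fix r t assume r: "r \<in> \<Pi>" and b: "\<forall>A\<in>set (snd r). holds M' t A"
  have b2: "\<forall>A\<in>set (snd r). holds M t A"
  proof
    fix A assume "A \<in> set (snd r)"
    then have "\<And>p. p \<in> body_props A \<Longrightarrow> M p = M' p" using assms(1) r unfolding prog_props_def by blast
    then show "holds M t A" using b holds_cong \<open>A \<in> set (snd r)\<close> by metis
  qed
  then have "hholds M t (fst r)" using assms(2) r unfolding model_prog_def model_rule_def by blast
  moreover have "\<And>p. p \<in> head_props (fst r) \<Longrightarrow> M p = M' p" using assms(1) r unfolding prog_props_def by blast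
  ultimately show "hholds M' t (fst r)" using hholds_cong by metis
qed

lemma point_fact_fst[simp]: "fst (point_fact P t) = P"
  unfolding point_fact_def by simp

lemma point_fact_set[simp]: "fact_set (point_fact P t) = {t}"
  unfolding fact_set_def point_fact_def iset_def by auto

theorem mainTheorem5:
  fixes \<Pi> :: "'p rule set" and D :: "'p fact set" and Q B E Q' :: 'p and tB tE :: int
  assumes "finite \<Pi>"
    and "is_dataset D"
    and "normal_form D"
    and "tB \<le> tE"
    and "B \<noteq> E" and "B \<noteq> Q'" and "E \<noteq> Q'"
    and "B \<noteq> Q" and "E \<noteq> Q" and "Q' \<noteq> Q"
    and "{B, E, Q'} \<inter> (prog_props \<Pi> \<union> data_props D) = {}"
  shows "s_brave \<Pi> D Q tB tE \<longleftrightarrow>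
    (\<exists>D'. D' \<subseteq> D \<and> consistent \<Pi> D' \<and>
       \<not> consistent (prog_Q \<Pi> Q B E Q') (D' \<union> {point_fact B (tB - 1), point_fact E (tE + 1)}))"
proof
  assume "s_brave \<Pi> D Q tB tE"
  then obtain R where R: "s_repair \<Pi> D R" "entails \<Pi> R Q tB tE" unfolding s_brave_def by blast
  have "\<not> consistent (prog_Q \<Pi> Q B E Q') (R \<union> {point_fact B (tB - 1), point_fact E (tE + 1)})"
  proof
    assume "consistent (prog_Q \<Pi> Q B E Q') (R \<union> {point_fact B (tB - 1), point_fact E (tE + 1)})"
    then obtain M where M: "model_prog M (prog_Q \<Pi> Q B E Q')"
      "model_data M (R \<union> {point_fact B (tB - 1), point_fact E (tE + 1)})"
      unfolding consistent_def by blast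
    have MP: "model_prog M \<Pi>" using M(1) unfolding model_prog_def prog_Q_def by auto
    have MR: "model_data M R" using M(2) unfolding model_data_def by auto
    have MB: "M B (tB - 1)" and ME: "M E (tE + 1)" using M(2) unfolding model_data_def
      by auto
    have MQ: "\<And>t. tB \<le> t \<Longrightarrow> t \<le> tE \<Longrightarrow> M Q t" using R(2) MP MR unfolding entails_def by blast
    have r1: "model_rule M (HAtom Q', [BUntil (0, None) (BAtom Q) (BAtom E)])"
      and r2: "model_rule M (HBot, [BAtom B, BAtom Q'])"
      using M(1) unfolding model_prog_def prog_Q_def by auto
    have "holds M (tB - 1) (BUntil (0, None) (BAtom Q) (BAtom E))"
      using ME MQ assms(4) by (auto simp: in_range_def intro!: exI[of _ "tE + 1"])
    then have "M Q' (tB - 1)" using r1 unfolding model_rule_def by auto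
    then show False using r2 MB unfolding model_rule_def by auto
  qed
  then show "\<exists>D'. D' \<subseteq> D \<and> consistent \<Pi> D' \<and>
       \<not> consistent (prog_Q \<Pi> Q B E Q') (D' \<union> {point_fact B (tB - 1), point_fact E (tE + 1)})"
    using R(1) unfolding s_repair_def by blast
next
  assume "\<exists>D'. D' \<subseteq> D \<and> consistent \<Pi> D' \<and>
       \<not> consistent (prog_Q \<Pi> Q B E Q') (D' \<union> {point_fact B (tB - 1), point_fact E (tE + 1)})"
  then obtain D' where D': "D' \<subseteq> D" "consistent \<Pi> D'"
    "\<not> consistent (prog_Q \<Pi> Q B E Q') (D' \<union> {point_fact B (tB - 1), point_fact E (tE + 1)})" by blast
  let ?C = "{R. D' \<subseteq> R \<and> R \<subseteq> D \<and> consistent \<Pi> R}"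
  have fD: "finite D" using assms(2) unfolding is_dataset_def by blast
  have sub: "?C \<subseteq> Pow D" by blast
  have fin: "finite ?C" using finite_subset[OF sub] fD by simp
  have ne: "?C \<noteq> {}" using D' by blast
  from finite_has_maximal[OF fin ne] obtain R where
    R: "R \<in> ?C" "\<forall>b\<in>?C. R \<le> b \<longrightarrow> R = b" by (elim bexE)
  have rep: "s_repair \<Pi> D R" unfolding s_repair_def
  proof (intro conjI allI impI)
    show "R \<subseteq> D" "consistent \<Pi> R" using R(1) by auto
  next
    fix R' assume "R \<subset> R' \<and> R' \<subseteq> D"
    then show "\<not> consistent \<Pi> R'" using R(1) R(2)[rule_format, of R'] by auto
  qed
  have ent: "entails \<Pi> R Q tB tE" unfolding entails_def
  proof (intro allI impI)
    fix M t assume M: "model_prog M \<Pi> \<and> model_data M R" and t: "tB \<le> t \<and> t \<le> tE"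
    show "M Q t"
    proof (rule ccontr)
      assume nq: "\<not> M Q t"
      define M' where "M' = (\<lambda>p. if p = B then (\<lambda>s. s = tB - 1) else if p = E then (\<lambda>s. s = tE + 1)
         else if p = Q' then (\<lambda>s. s \<le> tE + 1 \<and> (\<forall>u. s < u \<and> u < tE + 1 \<longrightarrow> M Q u)) else M p)"
      have MB: "M' B = (\<lambda>s. s = tB - 1)" unfolding M'_def by simp
      have ME: "M' E = (\<lambda>s. s = tE + 1)" unfolding M'_def using assms(5) by simp
      have MQ': "M' Q' = (\<lambda>s. s \<le> tE + 1 \<and> (\<forall>u. s < u \<and> u < tE + 1 \<longrightarrow> M Q u))"
        unfolding M'_def using assms(6,7) by simp
      have same: "\<And>p. p \<notin> {B, E, Q'} \<Longrightarrow> M' p = M p" unfolding M'_def by simp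
      have P: "model_prog M' \<Pi>"
      proof (rule model_prog_cong[OF _ M[THEN conjunct1]])
        fix p assume "p \<in> prog_props \<Pi>"
        then have "p \<notin> {B, E, Q'}" using assms(11) by blast
        then show "M p = M' p" using same by metis
      qed
      have DR: "model_data M' R" unfolding model_data_def
      proof (intro ballI)
        fix f x assume f: "f \<in> R" and x: "x \<in> fact_set f"
        have "fst f \<in> data_props D" using f R(1) unfolding data_props_def by blast
        then have "fst f \<notin> {B, E, Q'}" using assms(11) by blast
        then show "M' (fst f) x" using same M f x unfolding model_data_def by metis
      qed
      have MQ: "M' Q = M Q" using same assms(8-10) by simp
      have r1: "model_rule M' (HAtom Q', [BUntil (0, None) (BAtom Q) (BAtom E)])"
        unfolding model_rule_def
      proof (intro allI impI)
        fix s assume "\<forall>A\<in>set (snd (HAtom Q', [BUntil (0, None) (BAtom Q) (BAtom E)])). holds M' s A"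
        then have "holds M' s (BUntil (0, None) (BAtom Q) (BAtom E))" by simp
        then obtain t' where "in_range (0, None) (t' - s)" "M' E t'" "\<forall>u. s < u \<and> u < t' \<longrightarrow> M' Q u"
          by auto
        then have "s \<le> tE + 1" "\<forall>u. s < u \<and> u < tE + 1 \<longrightarrow> M Q u"
          unfolding ME MQ in_range_def by auto
        then show "hholds M' s (fst (HAtom Q', [BUntil (0, None) (BAtom Q) (BAtom E)]))"
          by (simp add: MQ')
      qed
      have r2: "model_rule M' (HBot, [BAtom B, BAtom Q'])"
        unfolding model_rule_def
      proof (intro allI impI)
        fix s assume "\<forall>A\<in>set (snd (HBot :: 'p head, [BAtom B, BAtom Q'])). holds M' s A"
        then have "M' B s" "M' Q' s" by auto
        then have "s = tB - 1" "\<forall>u. s < u \<and> u < tE + 1 \<longrightarrow> M Q u" unfolding MB MQ' by auto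
        then have "M Q t" using t by simp
        then show "hholds M' s (fst (HBot :: 'p head, [BAtom B, BAtom Q']))" using nq by simp
      qed
      have "model_prog M' (prog_Q \<Pi> Q B E Q')" using P r1 r2 unfolding model_prog_def prog_Q_def by blast
      moreover have "model_data M' (D' \<union> {point_fact B (tB - 1), point_fact E (tE + 1)})"
        using DR R(1) unfolding model_data_def
        by (auto simp: MB ME)
      ultimately show False using D'(3) unfolding consistent_def by blast
    qed
  qed
  show "s_brave \<Pi> D Q tB tE" unfolding s_brave_def using rep ent by blast
qed

end
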